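(* Let $m\ge 2$ and let $K_1,K_2$ be Latin squares on $[m]$. If $K_1$ and $K_2$ are main class isotopic, then the matroids $M[K_1]$ and $M[K_2]$ are isomorphic. If $K_1$ is not main class isotopic to $K_2$, then $M[K_1]$ is not isomorphic to $M[K_2]$.
   Context: A Latin square of order $m$ on $[m]$ is an $m\times m$ matrix $K=(k_{i,j})$ with entries in $[m]$ such that each symbol occurs exactly once in each row and each column. More generally, given $m$-sets $E_1,E_2,E_3$, a Latin square with rows indexed by $E_1$, columns by $E_2$ and symbols in $E_3$ has $T(K)=\{\{x_1,x_2,x_3\}: x_i\in E_i,\ k_{x_1,x_2}=x_3\}$. Two Latin squares are isotopic if one is obtained from the other by permuting rows, permuting columns, and applying a bijection of the symbol set. For a permutation $\sigma$ of $\{1,2,3\}$, the $\sigma$-conjugate $K_\sigma$ is the Latin square with rows indexed by $E_{\sigma 1}$, columns by $E_{\sigma2}$, symbols in $E_{\sigma 3}$, defined by $T(K_\sigma)=T(K)$. Two Latin squares are main class isotopic if one is isotopic to some conjugate of the other. For a Latin square $K=(k_{i,j})$ on $[m]$, let $\mathcal{C}[K]=\{\{i, m+j, 2m+k_{i,j}\}: 1\le i,j\le m\}$, a family of $3$-subsets of $[3m]$. For $m\ge 2$, $M[K]$ denotes the unique simple matroid on $[3m]$ of rank $3$ whose family of all $3$-element circuits equals $\mathcal{C}[K]$. *)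

theory Defs
  imports "HOL-Combinatorics.Permutations"
begin

definition matroid :: "'a set \<Rightarrow> 'a set set \<Rightarrow> bool" where
  "matroid E I \<longleftrightarrow> finite E \<and> (\<forall>X\<in>I. X \<subseteq> E) \<and> {} \<in> I \<and>
     (\<forall>X Y. X \<in> I \<and> Y \<subseteq> X \<longrightarrow> Y \<in> I) \<and>
     (\<forall>X\<in>I. \<forall>Y\<in>I. card X < card Y \<longrightarrow> (\<exists>e\<in>Y - X. insert e X \<in> I))"

definition matroid_circuit :: "'a set \<Rightarrow> 'a set set \<Rightarrow> 'a set \<Rightarrow> bool" where
  "matroid_circuit E I C \<longleftrightarrow> C \<subseteq> E \<and> C \<notin> I \<and> (\<forall>D. D \<subset> C \<longrightarrow> D \<in> I)"

definition matroid_rank :: "'a set set \<Rightarrow> nat" where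
  "matroid_rank I = Max (card ` I)"

definition simple_matroid :: "'a set \<Rightarrow> 'a set set \<Rightarrow> bool" where
  "simple_matroid E I \<longleftrightarrow> matroid E I \<and> (\<forall>X. X \<subseteq> E \<and> card X \<le> 2 \<longrightarrow> X \<in> I)"

definition matroid_iso :: "'a set \<Rightarrow> 'a set set \<Rightarrow> 'b set \<Rightarrow> 'b set set \<Rightarrow> bool" where
  "matroid_iso E1 I1 E2 I2 \<longleftrightarrow>
     (\<exists>f. bij_betw f E1 E2 \<and> (\<forall>X. X \<subseteq> E1 \<longrightarrow> (X \<in> I1 \<longleftrightarrow> f ` X \<in> I2)))"

text \<open>A Latin square on [m] = {1..m} is given by its entries K i j for i, j in [m]
  (values outside [m] x [m] are irrelevant).\<close>
definition latin_square :: "nat \<Rightarrow> (nat \<Rightarrow> nat \<Rightarrow> nat) \<Rightarrow> bool" where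
  "latin_square m K \<longleftrightarrow>
     (\<forall>i\<in>{1..m}. bij_betw (\<lambda>j. K i j) {1..m} {1..m}) \<and>
     (\<forall>j\<in>{1..m}. bij_betw (\<lambda>i. K i j) {1..m} {1..m})"

definition latin_triples :: "nat \<Rightarrow> (nat \<Rightarrow> nat \<Rightarrow> nat) \<Rightarrow> (nat \<times> nat \<times> nat) set" where
  "latin_triples m K = {(i, j, K i j) | i j. i \<in> {1..m} \<and> j \<in> {1..m}}"

definition tri_nth :: "nat \<times> nat \<times> nat \<Rightarrow> nat \<Rightarrow> nat" where
  "tri_nth t n = (if n = 0 then fst t else if n = 1 then fst (snd t) else snd (snd t))"

definition conj_triple :: "(nat \<Rightarrow> nat) \<Rightarrow> nat \<times> nat \<times> nat \<Rightarrow> nat \<times> nat \<times> nat" where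
  "conj_triple \<sigma> t = (tri_nth t (\<sigma> 0), tri_nth t (\<sigma> 1), tri_nth t (\<sigma> 2))"

definition main_class_isotopic :: "nat \<Rightarrow> (nat \<Rightarrow> nat \<Rightarrow> nat) \<Rightarrow> (nat \<Rightarrow> nat \<Rightarrow> nat) \<Rightarrow> bool" where
  "main_class_isotopic m K1 K2 \<longleftrightarrow>
     (\<exists>\<sigma> \<alpha> \<beta> \<gamma>. \<sigma> permutes {0,1,2} \<and>
        bij_betw \<alpha> {1..m} {1..m} \<and> bij_betw \<beta> {1..m} {1..m} \<and> bij_betw \<gamma> {1..m} {1..m} \<and>
        latin_triples m K2 =
          (\<lambda>(x, y, z). (\<alpha> x, \<beta> y, \<gamma> z)) ` (conj_triple \<sigma> ` latin_triples m K1))"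

definition latin_circuits :: "nat \<Rightarrow> (nat \<Rightarrow> nat \<Rightarrow> nat) \<Rightarrow> nat set set" where
  "latin_circuits m K = {{i, m + j, 2 * m + K i j} | i j. i \<in> {1..m} \<and> j \<in> {1..m}}"

text \<open>M[K]: the unique simple rank-3 matroid on [3m] whose 3-element circuits are exactly C[K]
  (represented by its family of independent sets; the ground set is {1..3m}).\<close>
definition latin_matroid :: "nat \<Rightarrow> (nat \<Rightarrow> nat \<Rightarrow> nat) \<Rightarrow> nat set set" where
  "latin_matroid m K = (THE I. simple_matroid {1..3*m} I \<and> matroid_rank I = 3 \<and>
      {C. matroid_circuit {1..3*m} I C \<and> card C = 3} = latin_circuits m K)"

end

theory Submission
  imports Defs
begin


definition cls :: "nat \<Rightarrow> nat \<Rightarrow> nat" where "cls m x = (x - 1) div m"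
definition pos :: "nat \<Rightarrow> nat \<Rightarrow> nat" where "pos m x = (x - 1) mod m + 1"
definition emb :: "nat \<Rightarrow> nat \<times> nat \<times> nat \<Rightarrow> nat set" where
  "emb m t = (\<lambda>c. c * m + tri_nth t c) ` {0,1,2}"
definition rng :: "nat \<Rightarrow> (nat \<times> nat \<times> nat) set" where
  "rng m = {t. \<forall>c<3. tri_nth t c \<in> {1..m}}"

lemma cls_eq: assumes "1 \<le> v" "v \<le> m" shows "cls m (c*m+v) = c"
proof -
  have m: "m \<noteq> 0" using assms by simp
  have "c*m+v-1 = (v-1) + c*m" using assms by simp
  then have "(c*m+v-1) div m = c + (v-1) div m" using m by (simp add: div_mult_self1)
  moreover have "(v-1) div m = 0" using assms by simp
  ultimately show ?thesis unfolding cls_def by simp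
qed

lemma pos_eq: assumes "1 \<le> v" "v \<le> m" shows "pos m (c*m+v) = v"
proof -
  have m: "m \<noteq> 0" using assms by simp
  have "c*m+v-1 = (v-1) + c*m" using assms by simp
  then have "(c*m+v-1) mod m = (v-1) mod m" using m by (simp add: mod_mult_self1)
  moreover have "(v-1) mod m = v - 1" using assms by simp
  ultimately show ?thesis unfolding pos_def using assms by simp
qed

lemma E_decomp: assumes "x \<in> {1..3*m}"
  shows "cls m x < 3" "pos m x \<in> {1..m}" "x = cls m x * m + pos m x"
proof -
  have m: "m > 0" using assms by auto
  have "x - 1 < 3 * m" using assms by auto
  then show "cls m x < 3" unfolding cls_def
    by (simp add: less_mult_imp_div_less)
  show "pos m x \<in> {1..m}" using m unfolding pos_def by (simp add: Suc_leI)
  show "x = cls m x * m + pos m x" using assms unfolding cls_def pos_def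
    by (metis One_nat_def add.assoc atLeastAtMost_iff div_mult_mod_eq le_add_diff_inverse2)
qed

lemma E_in: "(c::nat) < 3 \<Longrightarrow> v \<in> {1..m} \<Longrightarrow> c*m+v \<in> {1..3*m}"
proof -
  assume "c < 3" "v \<in> {1..m}"
  then have "c*m \<le> 2*m" by (intro mult_le_mono1) simp
  moreover have "1 \<le> v" "v \<le> m" using \<open>v \<in> {1..m}\<close> by auto
  ultimately have "c*m+v \<le> 3*m" "1 \<le> c*m+v" by linarith+
  then show ?thesis by simp
qed

lemma lt3: "(c::nat) < 3 \<longleftrightarrow> c = 0 \<or> c = 1 \<or> c = 2" by arith

lemma ex3: "(\<exists>c<(3::nat). P c) \<longleftrightarrow> P 0 \<or> P 1 \<or> P 2"
proof
  assume "\<exists>c<(3::nat). P c" then obtain c where "c < (3::nat)" "P c" by blast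
  then show "P 0 \<or> P 1 \<or> P 2" by (metis lt3)
next
  assume "P 0 \<or> P 1 \<or> P 2"
  moreover have "(0::nat) < 3" "(1::nat) < 3" "(2::nat) < 3" by simp_all
  ultimately show "\<exists>c<(3::nat). P c" by blast
qed

lemma all3: "(\<forall>c<(3::nat). P c) \<longleftrightarrow> P 0 \<and> P 1 \<and> P 2"
  using ex3[of "\<lambda>c. \<not> P c"] by blast

lemma emb_mem: 
  shows "x \<in> emb m t \<longleftrightarrow> (\<exists>c<3. x = c*m + tri_nth t c)"
  unfolding emb_def ex3 by auto

lemma emb_sub: assumes "t \<in> rng m" shows "emb m t \<subseteq> {1..3*m}"
proof
  fix x assume "x \<in> emb m t"
  then obtain c where c: "c < 3" "x = c*m + tri_nth t c" using emb_mem by auto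
  have "tri_nth t c \<in> {1..m}" using assms c unfolding rng_def by auto
  then show "x \<in> {1..3*m}" using E_in[OF c(1)] c by simp
qed

lemma emb_cls: assumes "t \<in> rng m" "c < 3"
  shows "cls m (c*m + tri_nth t c) = c" "pos m (c*m + tri_nth t c) = tri_nth t c"
  using assms cls_eq pos_eq unfolding rng_def by auto

lemma emb_card: assumes "t \<in> rng m" shows "card (emb m t) = 3"
proof -
  have "inj_on (\<lambda>c. c * m + tri_nth t c) {0,1,2}"
    by (rule inj_onI) (metis emb_cls(1)[OF assms] insert_iff empty_iff numeral_3_eq_3 less_Suc_eq
        zero_less_Suc One_nat_def numeral_2_eq_2 lessI)
  then show ?thesis unfolding emb_def by (simp add: card_image)
qed

lemma emb_inj: "inj_on (emb m) (rng m)"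
proof (rule inj_onI)
  fix t s assume t: "t \<in> rng m" and s: "s \<in> rng m" and eq: "emb m t = emb m s"
  have "tri_nth t c = tri_nth s c" if "c < 3" for c
  proof -
    have "c*m + tri_nth t c \<in> emb m t" using that unfolding emb_mem by blast
    then have "c*m + tri_nth t c \<in> emb m s" using eq by simp
    then obtain d where d: "d < 3" "c*m + tri_nth t c = d*m + tri_nth s d" using emb_mem by auto
    then have "c = d" using emb_cls(1)[OF t that] emb_cls(1)[OF s d(1)] by metis
    then show ?thesis using d by simp
  qed
  from this[of 0] this[of 1] this[of 2] show "t = s"
    by (cases t; cases s) (simp add: tri_nth_def)
qed

lemma emb_simp: "emb m (i,j,k) = {i, m+j, 2*m+k}"
  unfolding emb_def by (simp add: tri_nth_def)

lemma LC_emb: "latin_circuits m K = emb m ` latin_triples m K"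
proof (intro equalityI subsetI)
  fix X assume "X \<in> latin_circuits m K"
  then obtain i j where X: "X = {i, m+j, 2*m+K i j}" "i \<in> {1..m}" "j \<in> {1..m}"
    unfolding latin_circuits_def by blast
  have "(i,j,K i j) \<in> latin_triples m K" unfolding latin_triples_def using X by blast
  moreover have "X = emb m (i,j,K i j)" using X(1) by (simp add: emb_simp)
  ultimately show "X \<in> emb m ` latin_triples m K" by blast
next
  fix X assume "X \<in> emb m ` latin_triples m K"
  then obtain i j where X: "X = emb m (i,j,K i j)" "i \<in> {1..m}" "j \<in> {1..m}"
    unfolding latin_triples_def by blast
  then have "X = {i, m+j, 2*m+K i j}" by (simp add: emb_simp)
  then show "X \<in> latin_circuits m K" unfolding latin_circuits_def using X by blast
qed

lemma triples_rng: assumes "latin_square m K" shows "latin_triples m K \<subseteq> rng m"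
proof
  fix t assume "t \<in> latin_triples m K"
  then obtain i j where t: "t = (i,j,K i j)" "i \<in> {1..m}" "j \<in> {1..m}"
    unfolding latin_triples_def by auto
  have "K i j \<in> {1..m}" using assms t(2,3) unfolding latin_square_def bij_betw_def by blast
  then show "t \<in> rng m" using t unfolding rng_def all3 tri_nth_def by simp
qed



lemma latin_facts:
  assumes "latin_square m K"
  shows "\<And>i j j'. i \<in> {1..m} \<Longrightarrow> j \<in> {1..m} \<Longrightarrow> j' \<in> {1..m} \<Longrightarrow> K i j = K i j' \<Longrightarrow> j = j'"
    and "\<And>i i' j. i \<in> {1..m} \<Longrightarrow> i' \<in> {1..m} \<Longrightarrow> j \<in> {1..m} \<Longrightarrow> K i j = K i' j \<Longrightarrow> i = i'"
    and "\<And>i k. i \<in> {1..m} \<Longrightarrow> k \<in> {1..m} \<Longrightarrow> \<exists>j\<in>{1..m}. K i j = k"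
    and "\<And>j k. j \<in> {1..m} \<Longrightarrow> k \<in> {1..m} \<Longrightarrow> \<exists>i\<in>{1..m}. K i j = k"
proof -
  have r: "\<forall>i\<in>{1..m}. bij_betw (\<lambda>j. K i j) {1..m} {1..m}" and c: "\<forall>j\<in>{1..m}. bij_betw (\<lambda>i. K i j) {1..m} {1..m}"
    using assms unfolding latin_square_def by auto
  show "\<And>i j j'. i \<in> {1..m} \<Longrightarrow> j \<in> {1..m} \<Longrightarrow> j' \<in> {1..m} \<Longrightarrow> K i j = K i j' \<Longrightarrow> j = j'"
  proof -
    fix i j j' assume "i \<in> {1..m}" "j \<in> {1..m}" "j' \<in> {1..m}" "K i j = K i j'"
    then show "j = j'" using r unfolding bij_betw_def inj_on_def by blast
  qed
  show "\<And>i i' j. i \<in> {1..m} \<Longrightarrow> i' \<in> {1..m} \<Longrightarrow> j \<in> {1..m} \<Longrightarrow> K i j = K i' j \<Longrightarrow> i = i'"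
  proof -
    fix i i' j assume "i \<in> {1..m}" "i' \<in> {1..m}" "j \<in> {1..m}" "K i j = K i' j"
    then show "i = i'" using c unfolding bij_betw_def inj_on_def by blast
  qed
  show "\<And>i k. i \<in> {1..m} \<Longrightarrow> k \<in> {1..m} \<Longrightarrow> \<exists>j\<in>{1..m}. K i j = k"
  proof -
    fix i k assume a: "i \<in> {1..m}" "k \<in> {1..m}"
    then have "k \<in> (\<lambda>j. K i j) ` {1..m}" using r unfolding bij_betw_def by auto
    then show "\<exists>j\<in>{1..m}. K i j = k" by auto
  qed
  show "\<And>j k. j \<in> {1..m} \<Longrightarrow> k \<in> {1..m} \<Longrightarrow> \<exists>i\<in>{1..m}. K i j = k"
  proof -
    fix j k assume a: "j \<in> {1..m}" "k \<in> {1..m}"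
    then have "k \<in> (\<lambda>i. K i j) ` {1..m}" using c unfolding bij_betw_def by auto
    then show "\<exists>i\<in>{1..m}. K i j = k" by auto
  qed
qed

lemma tri_in: "i \<in> {1..m} \<Longrightarrow> j \<in> {1..m} \<Longrightarrow> (i, j, K i j) \<in> latin_triples m K"
  unfolding latin_triples_def by blast

lemma tri_nth_simps: "tri_nth (a,b,c) 0 = a" "tri_nth (a,b,c) 1 = b" "tri_nth (a,b,c) 2 = c"
  by (simp_all add: tri_nth_def)

lemma latin_unique_lt:
  assumes L: "latin_square m K" and t: "t \<in> latin_triples m K" and s: "s \<in> latin_triples m K"
    and cd: "c < d" "d < 3" and eq: "tri_nth t c = tri_nth s c" "tri_nth t d = tri_nth s d"
  shows "t = s"
proof -
  obtain i j where ti: "t = (i,j,K i j)" "i \<in> {1..m}" "j \<in> {1..m}" using t unfolding latin_triples_def by blast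
  obtain i' j' where si: "s = (i',j',K i' j')" "i' \<in> {1..m}" "j' \<in> {1..m}" using s unfolding latin_triples_def by blast
  have cases: "(c = 0 \<and> d = 1) \<or> (c = 0 \<and> d = 2) \<or> (c = 1 \<and> d = 2)" using cd by arith
  have "i = i' \<and> j = j'"
    using cases
  proof (elim disjE conjE)
    assume "c = 0" "d = 1" then show ?thesis using eq ti si by (simp add: tri_nth_def)
  next
    assume "c = 0" "d = 2"
    then have "i = i'" "K i j = K i' j'" using eq ti si by (simp_all add: tri_nth_def)
    then show ?thesis using latin_facts(1)[OF L, of i j j'] ti si by simp
  next
    assume "c = 1" "d = 2"
    then have "j = j'" "K i j = K i' j'" using eq ti si by (simp_all add: tri_nth_def)
    then show ?thesis using latin_facts(2)[OF L, of i i' j] ti si by simp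
  qed
  then show ?thesis using ti si by simp
qed

lemma latin_unique:
  assumes L: "latin_square m K" and t: "t \<in> latin_triples m K" and s: "s \<in> latin_triples m K"
    and cd: "c \<noteq> d" "c < 3" "d < 3" and eq: "tri_nth t c = tri_nth s c" "tri_nth t d = tri_nth s d"
  shows "t = s"
proof (cases "c < d")
  case True then show ?thesis using latin_unique_lt[OF L t s True cd(3) eq] by simp
next
  case False then have "d < c" using cd by simp
  then show ?thesis using latin_unique_lt[OF L t s \<open>d < c\<close> cd(2) eq(2) eq(1)] by simp
qed

lemma latin_exists_lt:
  assumes L: "latin_square m K" and cd: "c < d" "d < 3" and uv: "u \<in> {1..m}" "v \<in> {1..m}"
  shows "\<exists>t\<in>latin_triples m K. tri_nth t c = u \<and> tri_nth t d = v"
proof -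
  have cases: "(c = 0 \<and> d = 1) \<or> (c = 0 \<and> d = 2) \<or> (c = 1 \<and> d = 2)" using cd by arith
  then show ?thesis
  proof (elim disjE conjE)
    assume "c = 0" "d = 1" then show ?thesis using tri_in[OF uv, of K] by (force simp: tri_nth_def)
  next
    assume "c = 0" "d = 2"
    obtain j where j: "j \<in> {1..m}" "K u j = v" using latin_facts(3)[OF L uv] by blast
    show ?thesis using tri_in[OF uv(1) j(1), of K] j \<open>c = 0\<close> \<open>d = 2\<close> by (force simp: tri_nth_def)
  next
    assume "c = 1" "d = 2"
    obtain i where i: "i \<in> {1..m}" "K i u = v" using latin_facts(4)[OF L uv] by blast
    show ?thesis using tri_in[OF i(1) uv(1), of K] i \<open>c = 1\<close> \<open>d = 2\<close> by (force simp: tri_nth_def)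
  qed
qed

lemma latin_exists:
  assumes L: "latin_square m K" and cd: "c \<noteq> d" "c < 3" "d < 3" and uv: "u \<in> {1..m}" "v \<in> {1..m}"
  shows "\<exists>t\<in>latin_triples m K. tri_nth t c = u \<and> tri_nth t d = v"
proof (cases "c < d")
  case True then show ?thesis using latin_exists_lt[OF L True cd(3) uv] by simp
next
  case False then have "d < c" using cd by simp
  then show ?thesis using latin_exists_lt[OF L \<open>d < c\<close> cd(2) uv(2) uv(1)] by blast
qed

lemma emb_pt:
  assumes "t \<in> rng m" "s \<in> rng m" "c < 3" "d < 3" "c*m + tri_nth t c = d*m + tri_nth s d"
  shows "c = d" "tri_nth t c = tri_nth s d"
  using emb_cls[OF assms(1,3)] emb_cls[OF assms(2,4)] assms(5) by metis+

lemma two_point: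
  assumes L: "latin_square m K" and A: "A \<in> latin_circuits m K" and B: "B \<in> latin_circuits m K"
    and xy: "x \<noteq> y" "x \<in> A" "y \<in> A" "x \<in> B" "y \<in> B"
  shows "A = B"
proof -
  obtain t where t: "t \<in> latin_triples m K" "A = emb m t" using A unfolding LC_emb by blast
  obtain s where s: "s \<in> latin_triples m K" "B = emb m s" using B unfolding LC_emb by blast
  have tr: "t \<in> rng m" and sr: "s \<in> rng m" using t s triples_rng[OF L] by auto
  obtain c where c: "c < 3" "x = c*m + tri_nth t c" using xy(2)[unfolded t(2)] unfolding emb_mem by blast
  obtain c' where c': "c' < 3" "x = c'*m + tri_nth s c'" using xy(4)[unfolded s(2)] unfolding emb_mem by blast
  obtain d where d: "d < 3" "y = d*m + tri_nth t d" using xy(3)[unfolded t(2)] unfolding emb_mem by blast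
  obtain d' where d': "d' < 3" "y = d'*m + tri_nth s d'" using xy(5)[unfolded s(2)] unfolding emb_mem by blast
  have 1: "c = c'" "tri_nth t c = tri_nth s c'" using emb_pt[OF tr sr c(1) c'(1)] c c' by simp_all
  have 2: "d = d'" "tri_nth t d = tri_nth s d'" using emb_pt[OF tr sr d(1) d'(1)] d d' by simp_all
  have "c \<noteq> d" using c d xy(1) 1 2 by auto
  then have "t = s" using latin_unique[OF L t(1) s(1) _ c(1) d(1)] 1 2 by simp
  then show ?thesis using t s by simp
qed

lemma coll:
  assumes L: "latin_square m K" and x: "x \<in> {1..3*m}" and y: "y \<in> {1..3*m}" and xy: "x \<noteq> y"
  shows "(\<exists>C\<in>latin_circuits m K. x \<in> C \<and> y \<in> C) \<longleftrightarrow> cls m x \<noteq> cls m y"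
proof
  assume "\<exists>C\<in>latin_circuits m K. x \<in> C \<and> y \<in> C"
  then obtain t where t: "t \<in> latin_triples m K" "x \<in> emb m t" "y \<in> emb m t" unfolding LC_emb by blast
  have tr: "t \<in> rng m" using t triples_rng[OF L] by auto
  obtain c where c: "c < 3" "x = c*m + tri_nth t c" using t(2) unfolding emb_mem by blast
  obtain d where d: "d < 3" "y = d*m + tri_nth t d" using t(3) unfolding emb_mem by blast
  have "cls m x = c" "cls m y = d" using emb_cls[OF tr c(1)] emb_cls[OF tr d(1)] c d by simp_all
  moreover have "c \<noteq> d" using c d xy by auto
  ultimately show "cls m x \<noteq> cls m y" by simp
next
  assume ne: "cls m x \<noteq> cls m y"
  obtain t where t: "t \<in> latin_triples m K" "tri_nth t (cls m x) = pos m x" "tri_nth t (cls m y) = pos m y"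
    using latin_exists[OF L ne E_decomp(1)[OF x] E_decomp(1)[OF y] E_decomp(2)[OF x] E_decomp(2)[OF y]] by blast
  have "x \<in> emb m t" unfolding emb_mem using E_decomp[OF x] t(2) by metis
  moreover have "y \<in> emb m t" unfolding emb_mem using E_decomp[OF y] t(3) by metis
  ultimately show "\<exists>C\<in>latin_circuits m K. x \<in> C \<and> y \<in> C" using t(1) unfolding LC_emb by blast
qed



definition PI :: "nat \<Rightarrow> (nat \<Rightarrow> nat \<Rightarrow> nat) \<Rightarrow> nat set set" where
  "PI m K = {X. X \<subseteq> {1..3*m} \<and> (card X \<le> 2 \<or> (card X = 3 \<and> X \<notin> latin_circuits m K))}"

lemma LC_props: assumes "latin_square m K" "C \<in> latin_circuits m K"
  shows "C \<subseteq> {1..3*m}" "card C = 3" "finite C"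
proof -
  obtain t where t: "t \<in> latin_triples m K" "C = emb m t" using assms(2) unfolding LC_emb by blast
  have "t \<in> rng m" using t triples_rng[OF assms(1)] by auto
  then show "C \<subseteq> {1..3*m}" "card C = 3" using emb_sub emb_card t by auto
  then show "finite C" using finite_subset by blast
qed

lemma PI_matroid: assumes L: "latin_square m K" shows "matroid {1..3*m} (PI m K)"
  unfolding matroid_def
proof (intro conjI allI impI ballI)
  show "finite {1..3*m}" by simp
  show "{} \<in> PI m K" unfolding PI_def by simp
  fix X assume "X \<in> PI m K" then show "X \<subseteq> {1..3*m}" unfolding PI_def by simp
next
  fix X Y assume a: "X \<in> PI m K \<and> Y \<subseteq> X"
  then have XE: "X \<subseteq> {1..3*m}" unfolding PI_def by simp
  then have fX: "finite X" using finite_subset by blast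
  have YE: "Y \<subseteq> {1..3*m}" using a XE by blast
  have cY: "card Y \<le> card X" using a fX card_mono by blast
  show "Y \<in> PI m K"
  proof (cases "card Y \<le> 2")
    case True then show ?thesis using YE unfolding PI_def by simp
  next
    case False
    then have c3: "card X = 3" "X \<notin> latin_circuits m K" using a cY unfolding PI_def by auto
    then have "card Y = 3" using cY False by simp
    then have "Y = X" using card_subset_eq[OF fX] a c3 by simp
    then show ?thesis using a by simp
  qed
next
  fix X Y assume X: "X \<in> PI m K" and Y: "Y \<in> PI m K" and lt: "card X < card Y"
  have XE: "X \<subseteq> {1..3*m}" and YE: "Y \<subseteq> {1..3*m}" using X Y unfolding PI_def by auto
  have fX: "finite X" and fY: "finite Y" using XE YE finite_subset by blast+
  have ne: "Y - X \<noteq> {}"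
  proof
    assume "Y - X = {}" then have "Y \<subseteq> X" by blast
    then have "card Y \<le> card X" using card_mono[OF fX] by blast
    then show False using lt by simp
  qed
  show "\<exists>e\<in>Y - X. insert e X \<in> PI m K"
  proof (cases "card X \<le> 1")
    case True
    obtain e where e: "e \<in> Y - X" using ne by blast
    have "card (insert e X) \<le> 2" using True fX by (simp add: card_insert_if)
    moreover have "insert e X \<subseteq> {1..3*m}" using e XE YE by blast
    ultimately show ?thesis using e unfolding PI_def by blast
  next
    case False
    have cY3: "card Y \<le> 3" using Y unfolding PI_def by auto
    have cX2: "card X = 2" using False X lt cY3 unfolding PI_def by auto
    have cY: "card Y = 3" "Y \<notin> latin_circuits m K" using cX2 lt Y unfolding PI_def by auto
    show ?thesis
    proof (rule ccontr)
      assume "\<not> ?thesis"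
      then have bad: "\<And>e. e \<in> Y - X \<Longrightarrow> insert e X \<notin> PI m K" by blast
      have inLC: "insert e X \<in> latin_circuits m K" if e: "e \<in> Y - X" for e
      proof -
        have "card (insert e X) = 3" using e fX cX2 by simp
        moreover have "insert e X \<subseteq> {1..3*m}" using e XE YE by blast
        ultimately show ?thesis using bad[OF e] unfolding PI_def by auto
      qed
      obtain e1 where e1: "e1 \<in> Y - X" using ne by blast
      show False
      proof (cases "Y - X - {e1} = {}")
        case True
        then have "Y \<subseteq> insert e1 X" by blast
        moreover have "card (insert e1 X) = 3" using e1 fX cX2 by simp
        ultimately have "Y = insert e1 X" using card_subset_eq[of "insert e1 X" Y] fX cY(1) by simp
        then show False using inLC[OF e1] cY(2) by simp
      next
        case False
        then obtain e2 where e2: "e2 \<in> Y - X" "e2 \<noteq> e1" by blast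
        from card_2_iff[THEN iffD1, OF cX2] obtain x y where xy: "X = {x, y}" "x \<noteq> y" by blast
        have "insert e1 X = insert e2 X"
          using two_point[OF L inLC[OF e1] inLC[OF e2(1)] xy(2)] xy(1) by simp
        then show False using e1 e2 by blast
      qed
    qed
  qed
qed

lemma PI_simple: "latin_square m K \<Longrightarrow> simple_matroid {1..3*m} (PI m K)"
  unfolding simple_matroid_def using PI_matroid by (auto simp: PI_def)

lemma PI_fin: "finite (PI m K)"
proof -
  have "PI m K \<subseteq> Pow {1..3*m}" unfolding PI_def by auto
  then show ?thesis using finite_subset by blast
qed

lemma small_pt: assumes "t \<in> rng m" "x \<in> emb m t" "x \<le> m" shows "x = tri_nth t 0"
proof -
  obtain c where c: "c < 3" "x = c*m + tri_nth t c" using assms(2) unfolding emb_mem by blast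
  have "tri_nth t c \<ge> 1" using assms(1) c(1) unfolding rng_def by auto
  then have "c = 0"
  proof -
    assume "tri_nth t c \<ge> 1"
    show "c = 0"
    proof (rule ccontr)
      assume "c \<noteq> 0" then have "c*m \<ge> m" by simp
      then show False using c \<open>tri_nth t c \<ge> 1\<close> assms(3) by linarith
    qed
  qed
  then show ?thesis using c by simp
qed

lemma PI_rank: assumes L: "latin_square m K" and m: "m \<ge> 2" shows "matroid_rank (PI m K) = 3"
  unfolding matroid_rank_def
proof (rule Max_eqI)
  show "finite (card ` PI m K)" using PI_fin by simp
  fix y assume "y \<in> card ` PI m K" then show "y \<le> 3" unfolding PI_def by auto
next
  let ?X = "{1, 2, m+1}"
  have c: "card ?X = 3" using m by simp
  have nl: "?X \<notin> latin_circuits m K"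
  proof
    assume "?X \<in> latin_circuits m K"
    then obtain t where t: "t \<in> latin_triples m K" "?X = emb m t" unfolding LC_emb by blast
    have tr: "t \<in> rng m" using t triples_rng[OF L] by auto
    have "1 = tri_nth t 0" using small_pt[OF tr, of 1] t(2) m by auto
    moreover have "2 = tri_nth t 0" using small_pt[OF tr, of 2] t(2) m by auto
    ultimately show False by simp
  qed
  have "?X \<subseteq> {1..3*m}" using m by auto
  then have "?X \<in> PI m K" using c nl unfolding PI_def by simp
  then show "3 \<in> card ` PI m K" using c by force
qed

lemma PI_circuits: assumes L: "latin_square m K"
  shows "{C. matroid_circuit {1..3*m} (PI m K) C \<and> card C = 3} = latin_circuits m K"
proof (intro equalityI subsetI)
  fix C assume "C \<in> {C. matroid_circuit {1..3*m} (PI m K) C \<and> card C = 3}"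
  then have "C \<subseteq> {1..3*m}" "C \<notin> PI m K" "card C = 3" unfolding matroid_circuit_def by auto
  then show "C \<in> latin_circuits m K" unfolding PI_def by auto
next
  fix C assume C: "C \<in> latin_circuits m K"
  note p = LC_props[OF L C]
  have "C \<notin> PI m K" using p C unfolding PI_def by auto
  moreover have "D \<in> PI m K" if "D \<subset> C" for D
  proof -
    have "card D < 3" using psubset_card_mono[OF p(3) that] p(2) by simp
    moreover have "D \<subseteq> {1..3*m}" using that p(1) by blast
    ultimately show ?thesis unfolding PI_def by simp
  qed
  ultimately show "C \<in> {C. matroid_circuit {1..3*m} (PI m K) C \<and> card C = 3}"
    unfolding matroid_circuit_def using p by auto
qed

lemma PI_unique:
  assumes S: "simple_matroid {1..3*m} I" and R: "matroid_rank I = 3"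
    and Cc: "{C. matroid_circuit {1..3*m} I C \<and> card C = 3} = latin_circuits m K"
  shows "I = PI m K"
proof -
  have M: "matroid {1..3*m} I" using S unfolding simple_matroid_def by simp
  have sub: "\<And>X. X \<in> I \<Longrightarrow> X \<subseteq> {1..3*m}" using M unfolding matroid_def by blast
  have her: "\<And>X Y. X \<in> I \<Longrightarrow> Y \<subseteq> X \<Longrightarrow> Y \<in> I" using M unfolding matroid_def by blast
  have sm: "\<And>X. X \<subseteq> {1..3*m} \<Longrightarrow> card X \<le> 2 \<Longrightarrow> X \<in> I" using S unfolding simple_matroid_def by blast
  have "I \<subseteq> Pow {1..3*m}" using sub by blast
  then have fI: "finite I" using finite_subset by blast
  have le3: "card X \<le> 3" if "X \<in> I" for X
    using Max_ge[of "card ` I" "card X"] fI that R unfolding matroid_rank_def by simp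
  show ?thesis
  proof (intro equalityI subsetI)
    fix X assume X: "X \<in> I"
    have "X \<notin> latin_circuits m K" if "card X = 3"
    proof
      assume "X \<in> latin_circuits m K"
      then have "matroid_circuit {1..3*m} I X" using Cc by blast
      then show False using X unfolding matroid_circuit_def by blast
    qed
    then show "X \<in> PI m K" using le3[OF X] sub[OF X] unfolding PI_def by auto
  next
    fix X assume X: "X \<in> PI m K"
    then have XE: "X \<subseteq> {1..3*m}" unfolding PI_def by simp
    have fX: "finite X" using XE finite_subset by blast
    show "X \<in> I"
    proof (cases "card X \<le> 2")
      case True then show ?thesis using sm XE by simp
    next
      case False
      then have c3: "card X = 3" "X \<notin> latin_circuits m K" using X unfolding PI_def by auto
      show ?thesis
      proof (rule ccontr)
        assume nI: "X \<notin> I"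
        have "D \<in> I" if "D \<subset> X" for D
        proof -
          have "card D < 3" using psubset_card_mono[OF fX that] c3 by simp
          then show ?thesis using sm that XE by auto
        qed
        then have "matroid_circuit {1..3*m} I X" using XE nI unfolding matroid_circuit_def by blast
        then have "X \<in> latin_circuits m K" using Cc c3 by blast
        then show False using c3 by simp
      qed
    qed
  qed
qed

lemma LM_eq: assumes L: "latin_square m K" and m: "m \<ge> 2" shows "latin_matroid m K = PI m K"
  unfolding latin_matroid_def
proof (rule the_equality)
  show "simple_matroid {1..3*m} (PI m K) \<and> matroid_rank (PI m K) = 3 \<and>
    {C. matroid_circuit {1..3*m} (PI m K) C \<and> card C = 3} = latin_circuits m K"
    using PI_simple[OF L] PI_rank[OF L m] PI_circuits[OF L] by simp
  fix I assume "simple_matroid {1..3*m} I \<and> matroid_rank I = 3 \<and>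
    {C. matroid_circuit {1..3*m} I C \<and> card C = 3} = latin_circuits m K"
  then show "I = PI m K" using PI_unique by blast
qed



lemma iso_of_bij:
  assumes L1: "latin_square m K1" and L2: "latin_square m K2"
    and f: "bij_betw f {1..3*m} {1..3*m}"
    and LC: "latin_circuits m K2 = (\<lambda>C. f ` C) ` latin_circuits m K1"
  shows "matroid_iso {1..3*m} (PI m K1) {1..3*m} (PI m K2)"
  unfolding matroid_iso_def
proof (intro exI conjI allI impI)
  show "bij_betw f {1..3*m} {1..3*m}" by (rule f)
  fix X assume XE: "X \<subseteq> {1..3*m}"
  have inj: "inj_on f {1..3*m}" using bij_betw_imp_inj_on[OF f] .
  have fXE: "f ` X \<subseteq> {1..3*m}" using bij_betw_imp_surj_on[OF f] XE by blast
  have cX: "card (f ` X) = card X" using card_image inj_on_subset[OF inj XE] by blast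
  have lc: "X \<in> latin_circuits m K1 \<longleftrightarrow> f ` X \<in> latin_circuits m K2"
  proof
    assume "X \<in> latin_circuits m K1" then show "f ` X \<in> latin_circuits m K2" unfolding LC by (rule imageI)
  next
    assume "f ` X \<in> latin_circuits m K2"
    then have "f ` X \<in> (\<lambda>C. f ` C) ` latin_circuits m K1" unfolding LC .
    then obtain C where C: "C \<in> latin_circuits m K1" "f ` X = f ` C" by (auto simp: image_iff)
    have "C \<subseteq> {1..3*m}" using LC_props[OF L1 C(1)] by simp
    then have "X = C" using inj_on_image_eq_iff[OF inj XE] C(2) by blast
    then show "X \<in> latin_circuits m K1" using C by simp
  qed
  show "X \<in> PI m K1 \<longleftrightarrow> f ` X \<in> PI m K2"
    unfolding PI_def using XE fXE cX lc by auto
qed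

lemma bij_of_iso:
  assumes L1: "latin_square m K1" and L2: "latin_square m K2"
    and iso: "matroid_iso {1..3*m} (PI m K1) {1..3*m} (PI m K2)"
  shows "\<exists>f. bij_betw f {1..3*m} {1..3*m} \<and> latin_circuits m K2 = (\<lambda>C. f ` C) ` latin_circuits m K1"
proof -
  obtain f where f: "bij_betw f {1..3*m} {1..3*m}"
    and pr: "\<And>X. X \<subseteq> {1..3*m} \<Longrightarrow> X \<in> PI m K1 \<longleftrightarrow> f ` X \<in> PI m K2"
    using iso unfolding matroid_iso_def by blast
  have inj: "inj_on f {1..3*m}" using bij_betw_imp_inj_on[OF f] .
  have im: "f ` {1..3*m} = {1..3*m}" using bij_betw_imp_surj_on[OF f] .
  have key: "X \<in> latin_circuits m K1 \<longleftrightarrow> f ` X \<in> latin_circuits m K2"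
    if XE: "X \<subseteq> {1..3*m}" for X
  proof -
    have fXE: "f ` X \<subseteq> {1..3*m}" using im XE by blast
    have cX: "card (f ` X) = card X" using card_image inj_on_subset[OF inj XE] by blast
    show ?thesis
    proof
      assume C: "X \<in> latin_circuits m K1"
      then have "card X = 3" using LC_props[OF L1 C] by simp
      moreover have "X \<notin> PI m K1" using C \<open>card X = 3\<close> unfolding PI_def by simp
      ultimately show "f ` X \<in> latin_circuits m K2" using pr[OF XE] cX fXE unfolding PI_def by auto
    next
      assume C: "f ` X \<in> latin_circuits m K2"
      then have "card (f ` X) = 3" using LC_props[OF L2 C] by simp
      moreover have "f ` X \<notin> PI m K2" using C \<open>card (f ` X) = 3\<close> unfolding PI_def by simp
      ultimately show "X \<in> latin_circuits m K1" using pr[OF XE] cX XE unfolding PI_def by auto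
    qed
  qed
  have "latin_circuits m K2 = (\<lambda>C. f ` C) ` latin_circuits m K1"
  proof (intro equalityI subsetI)
    fix C' assume C': "C' \<in> latin_circuits m K2"
    have C'E: "C' \<subseteq> {1..3*m}" using LC_props[OF L2 C'] by simp
    let ?X = "inv_into {1..3*m} f ` C'"
    have XE: "?X \<subseteq> {1..3*m}"
    proof
      fix y assume "y \<in> ?X"
      then obtain z where z: "z \<in> C'" "y = inv_into {1..3*m} f z" by blast
      then have "z \<in> f ` {1..3*m}" using C'E im by blast
      then show "y \<in> {1..3*m}" using z(2) inv_into_into by metis
    qed
    have fX: "f ` ?X = C'" using C'E im by (simp add: image_inv_into_cancel)
    have "?X \<in> latin_circuits m K1" using key[OF XE] fX C' by simp
    then show "C' \<in> (\<lambda>C. f ` C) ` latin_circuits m K1" using fX by blast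
  next
    fix C' assume "C' \<in> (\<lambda>C. f ` C) ` latin_circuits m K1"
    then obtain C where C: "C \<in> latin_circuits m K1" "C' = f ` C" by blast
    then show "C' \<in> latin_circuits m K2" using key[OF LC_props(1)[OF L1 C(1)]] by simp
  qed
  then show ?thesis using f by blast
qed

lemma form_bij:
  assumes m: "m > 0" and pi: "\<pi> permutes {0,1,2}"
    and phi: "\<And>c. c < 3 \<Longrightarrow> bij_betw (\<phi> c) {1..m} {1..m}"
    and F: "\<And>x. x \<in> {1..3*m} \<Longrightarrow> F x = \<pi> (cls m x) * m + \<phi> (cls m x) (pos m x)"
  shows "bij_betw F {1..3*m} {1..3*m}"
proof -
  have p3: "\<And>c. c < 3 \<Longrightarrow> \<pi> c < 3"
  proof -
    fix c :: nat assume "c < 3" then have "c \<in> {0,1,2}" using lt3 by auto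
    then have "\<pi> c \<in> {0,1,2}" using permutes_in_image[OF pi] by simp
    then show "\<pi> c < 3" by auto
  qed
  have phin: "\<phi> c v \<in> {1..m}" if "c < 3" "v \<in> {1..m}" for c v
    using bij_betw_apply[OF phi[OF that(1)] that(2)] .
  have Fc: "cls m (F x) = \<pi> (cls m x)" "pos m (F x) = \<phi> (cls m x) (pos m x)" "F x \<in> {1..3*m}"
    if x: "x \<in> {1..3*m}" for x
  proof -
    have v: "\<phi> (cls m x) (pos m x) \<in> {1..m}" using phin E_decomp[OF x] by blast
    show "cls m (F x) = \<pi> (cls m x)" "pos m (F x) = \<phi> (cls m x) (pos m x)"
      using F[OF x] cls_eq pos_eq v by auto
    show "F x \<in> {1..3*m}" using F[OF x] E_in[OF p3[OF E_decomp(1)[OF x]] v] by simp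
  qed
  have inj: "inj_on F {1..3*m}"
  proof (rule inj_onI)
    fix x y assume x: "x \<in> {1..3*m}" and y: "y \<in> {1..3*m}" and eq: "F x = F y"
    have "\<pi> (cls m x) = \<pi> (cls m y)" using Fc[OF x] Fc[OF y] eq by metis
    then have c: "cls m x = cls m y" using permutes_inj[OF pi] unfolding inj_def by blast
    have "\<phi> (cls m x) (pos m x) = \<phi> (cls m x) (pos m y)" using Fc[OF x] Fc[OF y] eq c by metis
    then have "pos m x = pos m y" using inj_onD[OF bij_betw_imp_inj_on[OF phi[OF E_decomp(1)[OF x]]] _ E_decomp(2)[OF x] E_decomp(2)[OF y]]
      by blast
    then show "x = y" using E_decomp(3)[OF x] E_decomp(3)[OF y] c by metis
  qed
  have "F ` {1..3*m} \<subseteq> {1..3*m}" using Fc by blast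
  then have "F ` {1..3*m} = {1..3*m}" using endo_inj_surj[OF _ _ inj] by simp
  then show ?thesis using inj unfolding bij_betw_def by simp
qed

lemma in3: "(c::nat) \<in> {0,1,2} \<longleftrightarrow> c < 3" using lt3 by auto

lemma fmap_emb:
  assumes \<sigma>: "\<sigma> permutes {0,1,2}"
    and f: "\<And>x. x \<in> {1..3*m} \<Longrightarrow> f x = inv \<sigma> (cls m x) * m + h (inv \<sigma> (cls m x)) (pos m x)"
    and t: "t \<in> rng m"
  shows "f ` emb m t = emb m ((\<lambda>(x,y,z). (h 0 x, h 1 y, h 2 z)) (conj_triple \<sigma> t))"
proof -
  let ?s = "(\<lambda>(x,y,z). (h 0 x, h 1 y, h 2 z)) (conj_triple \<sigma> t)"
  have S: "\<sigma> ` {0,1,2} = {0,1,2::nat}" using permutes_image[OF \<sigma>] .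
  have tri: "tri_nth ?s d = h d (tri_nth t (\<sigma> d))" if "d < 3" for d
  proof -
    have "d = 0 \<or> d = 1 \<or> d = 2" using that lt3 by blast
    then show ?thesis by (elim disjE) (simp_all add: conj_triple_def tri_nth_def split: prod.splits)
  qed
  have fc: "f (c*m + tri_nth t c) = inv \<sigma> c * m + h (inv \<sigma> c) (tri_nth t c)" if c: "c \<in> {0,1,2}" for c
  proof -
    have c3: "c < 3" using c in3 by blast
    have v: "tri_nth t c \<in> {1..m}" using t c3 unfolding rng_def by blast
    show ?thesis using f[OF E_in[OF c3 v]] emb_cls[OF t c3] by simp
  qed
  have "f ` emb m t = (\<lambda>c. f (c*m + tri_nth t c)) ` {0,1,2}" unfolding emb_def by (simp add: image_image)
  also have "\<dots> = (\<lambda>c. inv \<sigma> c * m + h (inv \<sigma> c) (tri_nth t c)) ` {0,1,2}"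
    using fc by (rule image_cong[OF refl])
  also have "\<dots> = (\<lambda>c. inv \<sigma> c * m + h (inv \<sigma> c) (tri_nth t c)) ` \<sigma> ` {0,1,2}" using S by simp
  also have "\<dots> = (\<lambda>d. d * m + h d (tri_nth t (\<sigma> d))) ` {0,1,2}"
    by (simp add: image_image permutes_inverses(2)[OF \<sigma>])
  also have "\<dots> = (\<lambda>d. d * m + tri_nth ?s d) ` {0,1,2}"
    using tri in3 by (intro image_cong[OF refl]) simp
  also have "\<dots> = emb m ?s" unfolding emb_def ..
  finally show ?thesis .
qed



lemma tri_M:
  fixes h :: "nat \<Rightarrow> nat \<Rightarrow> nat"
  assumes "d < 3"
  shows "tri_nth ((\<lambda>(x,y,z). (h 0 x, h 1 y, h 2 z)) (conj_triple \<sigma> t)) d = h d (tri_nth t (\<sigma> d))"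
proof -
  have "d = 0 \<or> d = 1 \<or> d = 2" using assms lt3 by blast
  then show ?thesis by (elim disjE) (simp_all add: conj_triple_def tri_nth_def split: prod.splits)
qed

lemma perm3: "\<sigma> permutes {0,1,2} \<Longrightarrow> (d::nat) < 3 \<Longrightarrow> \<sigma> d < 3"
  using permutes_in_image[of \<sigma> "{0,1,2}" d] in3 by blast

lemma M_rng:
  fixes h :: "nat \<Rightarrow> nat \<Rightarrow> nat"
  assumes \<sigma>: "\<sigma> permutes {0,1,2}" and h: "\<And>d v. d < 3 \<Longrightarrow> v \<in> {1..m} \<Longrightarrow> h d v \<in> {1..m}"
    and t: "t \<in> rng m"
  shows "(\<lambda>(x,y,z). (h 0 x, h 1 y, h 2 z)) (conj_triple \<sigma> t) \<in> rng m"
  unfolding rng_def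
proof (intro CollectI allI impI)
  fix d :: nat assume d: "d < 3"
  have "tri_nth t (\<sigma> d) \<in> {1..m}" using t perm3[OF \<sigma> d] unfolding rng_def by blast
  then show "tri_nth ((\<lambda>(x,y,z). (h 0 x, h 1 y, h 2 z)) (conj_triple \<sigma> t)) d \<in> {1..m}"
    using tri_M[OF d] h[OF d] by simp
qed

lemma LC_image:
  fixes h :: "nat \<Rightarrow> nat \<Rightarrow> nat"
  assumes L1: "latin_square m K1" and \<sigma>: "\<sigma> permutes {0,1,2}"
    and f: "\<And>x. x \<in> {1..3*m} \<Longrightarrow> f x = inv \<sigma> (cls m x) * m + h (inv \<sigma> (cls m x)) (pos m x)"
  shows "(\<lambda>C. f ` C) ` latin_circuits m K1 =
     emb m ` ((\<lambda>(x,y,z). (h 0 x, h 1 y, h 2 z)) ` conj_triple \<sigma> ` latin_triples m K1)"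
proof -
  have "(\<lambda>C. f ` C) ` latin_circuits m K1 = (\<lambda>t. f ` emb m t) ` latin_triples m K1"
    unfolding LC_emb by (simp add: image_image)
  also have "\<dots> = (\<lambda>t. emb m ((\<lambda>(x,y,z). (h 0 x, h 1 y, h 2 z)) (conj_triple \<sigma> t))) ` latin_triples m K1"
    using fmap_emb[OF \<sigma> f] triples_rng[OF L1] by (intro image_cong[OF refl]) blast
  also have "\<dots> = emb m ` ((\<lambda>(x,y,z). (h 0 x, h 1 y, h 2 z)) ` conj_triple \<sigma> ` latin_triples m K1)"
    by (simp add: image_image)
  finally show ?thesis .
qed

lemma fwd:
  assumes L1: "latin_square m K1" and L2: "latin_square m K2" and m: "m \<ge> 2"
    and mc: "main_class_isotopic m K1 K2"
  shows "\<exists>f. bij_betw f {1..3*m} {1..3*m} \<and> latin_circuits m K2 = (\<lambda>C. f ` C) ` latin_circuits m K1"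
proof -
  obtain \<sigma> \<alpha> \<beta> \<gamma> where \<sigma>: "\<sigma> permutes {0,1,2}"
    and a: "bij_betw \<alpha> {1..m} {1..m}" and b: "bij_betw \<beta> {1..m} {1..m}" and g: "bij_betw \<gamma> {1..m} {1..m}"
    and T: "latin_triples m K2 = (\<lambda>(x, y, z). (\<alpha> x, \<beta> y, \<gamma> z)) ` (conj_triple \<sigma> ` latin_triples m K1)"
    using mc unfolding main_class_isotopic_def by blast
  define h :: "nat \<Rightarrow> nat \<Rightarrow> nat" where "h d = (if d = 0 then \<alpha> else if d = 1 then \<beta> else \<gamma>)" for d
  define f where "f x = inv \<sigma> (cls m x) * m + h (inv \<sigma> (cls m x)) (pos m x)" for x
  have hb: "bij_betw (h d) {1..m} {1..m}" for d unfolding h_def using a b g by simp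
  have \<tau>: "inv \<sigma> permutes {0,1,2}" using permutes_inv[OF \<sigma>] .
  have "bij_betw f {1..3*m} {1..3*m}"
    by (rule form_bij[of m "inv \<sigma>" "\<lambda>c. h (inv \<sigma> c)"]) (use m \<tau> hb f_def in auto)
  moreover have "latin_circuits m K2 = (\<lambda>C. f ` C) ` latin_circuits m K1"
  proof -
    have eqM: "(\<lambda>(x, y, z). (\<alpha> x, \<beta> y, \<gamma> z)) = (\<lambda>(x::nat,y::nat,z::nat). (h 0 x, h 1 y, h 2 z))"
      unfolding h_def by simp
    have "latin_circuits m K2 = emb m ` latin_triples m K2" by (rule LC_emb)
    also have "\<dots> = (\<lambda>C. f ` C) ` latin_circuits m K1"
      unfolding T eqM using LC_image[OF L1 \<sigma>, of f h] f_def by simp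
    finally show ?thesis .
  qed
  ultimately show ?thesis by blast
qed


lemma bwd:
  assumes L1: "latin_square m K1" and L2: "latin_square m K2" and m: "m \<ge> 2"
    and f: "bij_betw f {1..3*m} {1..3*m}"
    and LC: "latin_circuits m K2 = (\<lambda>C. f ` C) ` latin_circuits m K1"
  shows "main_class_isotopic m K1 K2"
proof -
  let ?E = "{1..3*m}"
  have inj: "inj_on f ?E" using bij_betw_imp_inj_on[OF f] .
  have fE: "f x \<in> ?E" if "x \<in> ?E" for x using bij_betw_apply[OF f that] .
  have pres: "cls m x = cls m y \<longleftrightarrow> cls m (f x) = cls m (f y)" if x: "x \<in> ?E" and y: "y \<in> ?E" for x y
  proof (cases "x = y")
    case True then show ?thesis by simp
  next
    case False
    then have fne: "f x \<noteq> f y" using inj x y unfolding inj_on_def by blast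
    have "(\<exists>C\<in>latin_circuits m K1. x \<in> C \<and> y \<in> C) \<longleftrightarrow> (\<exists>C\<in>latin_circuits m K2. f x \<in> C \<and> f y \<in> C)"
    proof
      assume "\<exists>C\<in>latin_circuits m K1. x \<in> C \<and> y \<in> C"
      then obtain C where C: "C \<in> latin_circuits m K1" "x \<in> C" "y \<in> C" by blast
      have "f ` C \<in> latin_circuits m K2" unfolding LC using C(1) by (rule imageI)
      then show "\<exists>C\<in>latin_circuits m K2. f x \<in> C \<and> f y \<in> C" using C by blast
    next
      assume "\<exists>C\<in>latin_circuits m K2. f x \<in> C \<and> f y \<in> C"
      then obtain C' where C': "C' \<in> latin_circuits m K2" "f x \<in> C'" "f y \<in> C'" by blast
      have "C' \<in> (\<lambda>C. f ` C) ` latin_circuits m K1" using C'(1) unfolding LC .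
      then obtain C where C: "C \<in> latin_circuits m K1" "C' = f ` C" by (auto simp: image_iff)
      have CE: "C \<subseteq> ?E" using LC_props(1)[OF L1 C(1)] .
      have "x \<in> C" using inj_on_image_mem_iff[OF inj x CE] C'(2) C(2) by simp
      moreover have "y \<in> C" using inj_on_image_mem_iff[OF inj y CE] C'(3) C(2) by simp
      ultimately show "\<exists>C\<in>latin_circuits m K1. x \<in> C \<and> y \<in> C" using C(1) by blast
    qed
    then show ?thesis using coll[OF L1 x y False] coll[OF L2 fE[OF x] fE[OF y] fne] by simp
  qed
  define \<pi> where "\<pi> c = (if c < 3 then cls m (f (c*m+1)) else c)" for c
  have m1: "(1::nat) \<in> {1..m}" using m by simp
  have pt: "c*m+1 \<in> ?E" if "c < 3" for c using E_in[OF that m1] .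
  have clsf: "cls m (f x) = \<pi> (cls m x)" if x: "x \<in> ?E" for x
  proof -
    have c: "cls m x < 3" using E_decomp(1)[OF x] .
    have "cls m (cls m x * m + 1) = cls m x" using cls_eq[of 1 m "cls m x"] m by simp
    then show ?thesis using pres[OF x pt[OF c]] c unfolding \<pi>_def by simp
  qed
  have \<pi>3: "\<pi> c < 3" if "c < 3" for c
    using E_decomp(1)[OF fE[OF pt[OF that]]] that unfolding \<pi>_def by simp
  have \<pi>inj: "inj_on \<pi> {0,1,2}"
  proof (rule inj_onI)
    fix c d assume c: "c \<in> {0,1,2::nat}" and d: "d \<in> {0,1,2::nat}" and eq: "\<pi> c = \<pi> d"
    have c3: "c < 3" and d3: "d < 3" using in3[THEN iffD1, OF c] in3[THEN iffD1, OF d] .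
    have "cls m (f (c*m+1)) = cls m (f (d*m+1))" using eq c3 d3 unfolding \<pi>_def by simp
    then have "cls m (c*m+1) = cls m (d*m+1)" using pres[OF pt[OF c3] pt[OF d3]] by simp
    then show "c = d" using cls_eq[of 1 m c] cls_eq[of 1 m d] m by simp
  qed
  have \<pi>im: "\<pi> ` {0,1,2} \<subseteq> {0,1,2::nat}"
  proof
    fix y assume "y \<in> \<pi> ` {0,1,2::nat}"
    then obtain c where c: "c \<in> {0,1,2::nat}" "y = \<pi> c" by blast
    have "\<pi> c < 3" using \<pi>3 in3[THEN iffD1, OF c(1)] .
    then show "y \<in> {0,1,2}" using in3[THEN iffD2] c(2) by simp
  qed
  have \<pi>p: "\<pi> permutes {0,1,2}"
  proof (rule bij_imp_permutes)
    show "bij_betw \<pi> {0,1,2} {0,1,2}" unfolding bij_betw_def using \<pi>inj endo_inj_surj[OF _ \<pi>im \<pi>inj] by simp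
    fix x :: nat assume "x \<notin> {0,1,2}" then show "\<pi> x = x" unfolding \<pi>_def using in3 by auto
  qed
  define \<phi> where "\<phi> c v = pos m (f (c*m+v))" for c v
  have fform: "f x = \<pi> (cls m x) * m + \<phi> (cls m x) (pos m x)" if x: "x \<in> ?E" for x
  proof -
    have "f x = cls m (f x) * m + pos m (f x)" using E_decomp(3)[OF fE[OF x]] .
    moreover have "pos m (f x) = \<phi> (cls m x) (pos m x)" unfolding \<phi>_def using E_decomp(3)[OF x] by simp
    ultimately show ?thesis using clsf[OF x] by simp
  qed
  have \<phi>b: "bij_betw (\<phi> c) {1..m} {1..m}" if c: "c < 3" for c
  proof -
    have im: "\<phi> c ` {1..m} \<subseteq> {1..m}"
    proof
      fix y assume "y \<in> \<phi> c ` {1..m}"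
      then obtain v where v: "v \<in> {1..m}" "y = \<phi> c v" by blast
      show "y \<in> {1..m}" using E_decomp(2)[OF fE[OF E_in[OF c v(1)]]] v unfolding \<phi>_def by simp
    qed
    have ij: "inj_on (\<phi> c) {1..m}"
    proof (rule inj_onI)
      fix v w assume v: "v \<in> {1..m}" and w: "w \<in> {1..m}" and eq: "\<phi> c v = \<phi> c w"
      have a: "c*m+v \<in> ?E" and b: "c*m+w \<in> ?E" using E_in[OF c v] E_in[OF c w] .
      have "cls m (c*m+v) = c" "cls m (c*m+w) = c" using cls_eq v w by auto
      then have "cls m (f (c*m+v)) = cls m (f (c*m+w))" using clsf[OF a] clsf[OF b] by simp
      moreover have "pos m (f (c*m+v)) = pos m (f (c*m+w))" using eq unfolding \<phi>_def .
      ultimately have "f (c*m+v) = f (c*m+w)" using E_decomp(3)[OF fE[OF a]] E_decomp(3)[OF fE[OF b]] by metis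
      then have "c*m+v = c*m+w" using inj a b unfolding inj_on_def by blast
      then show "v = w" by simp
    qed
    show ?thesis unfolding bij_betw_def using ij endo_inj_surj[OF _ im ij] by simp
  qed
  define \<sigma> where "\<sigma> = inv \<pi>"
  define h where "h d = \<phi> (\<sigma> d)" for d
  have \<sigma>p: "\<sigma> permutes {0,1,2}" unfolding \<sigma>_def using permutes_inv[OF \<pi>p] .
  have inv\<sigma>: "inv \<sigma> = \<pi>" unfolding \<sigma>_def using permutes_inv_inv[OF \<pi>p] .
  have f': "f x = inv \<sigma> (cls m x) * m + h (inv \<sigma> (cls m x)) (pos m x)" if x: "x \<in> ?E" for x
  proof -
    have h\<pi>: "h (\<pi> c) = \<phi> c" for c unfolding h_def \<sigma>_def using permutes_inverses(2)[OF \<pi>p] by simp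
    show ?thesis unfolding inv\<sigma> h\<pi> using fform[OF x] .
  qed
  have hR: "h d v \<in> {1..m}" if "d < 3" "v \<in> {1..m}" for d v
    unfolding h_def using bij_betw_apply[OF \<phi>b[OF perm3[OF \<sigma>p that(1)]] that(2)] .
  let ?M = "\<lambda>t. (\<lambda>(x,y,z). (h 0 x, h 1 y, h 2 z)) (conj_triple \<sigma> t)"
  have "emb m ` latin_triples m K2 = emb m ` ((\<lambda>(x,y,z). (h 0 x, h 1 y, h 2 z)) ` conj_triple \<sigma> ` latin_triples m K1)"
    using LC LC_image[OF L1 \<sigma>p f'] unfolding LC_emb by simp
  moreover have sub: "(\<lambda>(x,y,z). (h 0 x, h 1 y, h 2 z)) ` conj_triple \<sigma> ` latin_triples m K1 \<subseteq> rng m"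
  proof
    fix s assume "s \<in> (\<lambda>(x,y,z). (h 0 x, h 1 y, h 2 z)) ` conj_triple \<sigma> ` latin_triples m K1"
    then obtain t where t: "t \<in> latin_triples m K1" "s = (\<lambda>(x,y,z). (h 0 x, h 1 y, h 2 z)) (conj_triple \<sigma> t)"
      by blast
    have "t \<in> rng m" using t(1) triples_rng[OF L1] by (rule subsetD[rotated])
    then show "s \<in> rng m" using M_rng[OF \<sigma>p hR] t(2) by simp
  qed
  ultimately have T: "latin_triples m K2 = (\<lambda>(x,y,z). (h 0 x, h 1 y, h 2 z)) ` conj_triple \<sigma> ` latin_triples m K1"
    using inj_on_image_eq_iff[OF emb_inj triples_rng[OF L2] sub] by simp
  have hb: "bij_betw (h d) {1..m} {1..m}" if "d < 3" for d
    unfolding h_def using \<phi>b[OF perm3[OF \<sigma>p that]] .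
  show ?thesis unfolding main_class_isotopic_def
    using \<sigma>p hb[of 0] hb[of 1] hb[of 2] T by (intro exI[of _ \<sigma>] exI[of _ "h 0"] exI[of _ "h 1"] exI[of _ "h 2"]) simp
qed

theorem mainTheorem4:
  fixes m :: nat and K1 K2 :: "nat \<Rightarrow> nat \<Rightarrow> nat"
  assumes "m \<ge> 2" and "latin_square m K1" and "latin_square m K2"
  shows "(main_class_isotopic m K1 K2 \<longrightarrow>
            matroid_iso {1..3*m} (latin_matroid m K1) {1..3*m} (latin_matroid m K2)) \<and>
         (\<not> main_class_isotopic m K1 K2 \<longrightarrow>
            \<not> matroid_iso {1..3*m} (latin_matroid m K1) {1..3*m} (latin_matroid m K2))"
proof -
  have e1: "latin_matroid m K1 = PI m K1" using LM_eq[OF assms(2,1)] .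
  have e2: "latin_matroid m K2 = PI m K2" using LM_eq[OF assms(3,1)] .
  show ?thesis unfolding e1 e2
  proof (intro conjI impI)
    assume "main_class_isotopic m K1 K2"
    then obtain f where "bij_betw f {1..3*m} {1..3*m}" "latin_circuits m K2 = (\<lambda>C. f ` C) ` latin_circuits m K1"
      using fwd[OF assms(2,3,1)] by blast
    then show "matroid_iso {1..3*m} (PI m K1) {1..3*m} (PI m K2)" using iso_of_bij[OF assms(2,3)] by blast
  next
    assume n: "\<not> main_class_isotopic m K1 K2"
    show "\<not> matroid_iso {1..3*m} (PI m K1) {1..3*m} (PI m K2)"
    proof
      assume "matroid_iso {1..3*m} (PI m K1) {1..3*m} (PI m K2)"
      then obtain f where "bij_betw f {1..3*m} {1..3*m}" "latin_circuits m K2 = (\<lambda>C. f ` C) ` latin_circuits m K1"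
        using bij_of_iso[OF assms(2,3)] by blast
      then show False using bwd[OF assms(2,3,1)] n by blast
    qed
  qed
qed


end
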